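(* Let $v(0)\in\mathcal N^*$, $v(0)\neq0$, and let $v(t)$ be the unique solution of the critical equations with initial condition $v(0)$, with $\Phi(t)=m_0(0)-m_0(t)$. Then, with $t_{gel}=1/m_1(0)$, $$\Phi(T)=\begin{cases}0& T\le t_{gel}\\ F_0(T)& T\ge t_{gel}\end{cases}\qquad\text{and}\qquad \int_0^T\Phi(t)dt=\begin{cases}0& T\le t_{gel}\\ G_0(T)& T\ge t_{gel}.\end{cases}$$
   Context: $\mathcal N$: sequences $v=(v_k)_{k\ge1}$ of nonnegative reals with $\sum_kv_k<\infty$; $\mathcal N^*$: those with finitely many nonzero terms; $m_0=\sum_kv_k$, $m_1=\sum_kkv_k$. Critical equations: $v(t)\in\mathcal N$ with $v_k(t)=v_k(0)+\int_0^t\big(\tfrac k2\sum_{l=1}^{k-1}v_lv_{k-l}-kv_km_0(s)\big)ds$ for all $k$, $m_0(0)-m_0(t)$ nondecreasing in $[0,m_0(0))$. Functions $F_0,G_0$ on $(0,\infty)$: for $x\in\mathbb R$ put $w(x):=\big(\sum_kkv_k(0)e^{-kx}\big)^{-1}$, a strictly increasing bijection $\mathbb R\to(0,\infty)$, and define $F_0(w(x)):=\sum_kv_k(0)(1-e^{-kx})$ and $G_0(w(x)):=w(x)F_0(w(x))-x$. (Equivalently, with $U_0(x)=\sum_kv_k(0)(e^{-kx}-1)$ and $X_0$ its inverse function, $F_0(-X_0'(u))=-u$ and $G_0(w)=-\min_u\{wu+X_0(u)\}$ is the Legendre transform.) *)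

theory Defs
  imports "HOL-Analysis.Analysis"
begin

(* Sequences v = (v_k)_{k>=1} are represented as functions nat => real; index 0 is ignored. *)

definition in_N :: "(nat \<Rightarrow> real) \<Rightarrow> bool" where
  "in_N v \<longleftrightarrow> (\<forall>k\<ge>1. v k \<ge> 0) \<and> summable (\<lambda>k. v (Suc k))"

definition in_Nstar :: "(nat \<Rightarrow> real) \<Rightarrow> bool" where
  "in_Nstar v \<longleftrightarrow> in_N v \<and> finite {k. k \<ge> 1 \<and> v k \<noteq> 0}"

definition m0 :: "(nat \<Rightarrow> real) \<Rightarrow> real" where
  "m0 v = (\<Sum>k. v (Suc k))"

definition m1 :: "(nat \<Rightarrow> real) \<Rightarrow> real" where
  "m1 v = (\<Sum>k. real (Suc k) * v (Suc k))"

definition critical_solution :: "(real \<Rightarrow> nat \<Rightarrow> real) \<Rightarrow> bool" where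
  "critical_solution v \<longleftrightarrow>
     (\<forall>t\<ge>0. in_N (v t)) \<and>
     (\<forall>t\<ge>0. \<forall>k\<ge>1.
        ((\<lambda>s. real k / 2 * (\<Sum>l=1..k-1. v s l * v s (k - l)) - real k * v s k * m0 (v s))
           has_integral (v t k - v 0 k)) {0..t}) \<and>
     mono_on {0..} (\<lambda>t. m0 (v 0) - m0 (v t)) \<and>
     (\<forall>t\<ge>0. m0 (v 0) - m0 (v t) \<in> {0..<m0 (v 0)})"

definition wfun :: "(nat \<Rightarrow> real) \<Rightarrow> real \<Rightarrow> real" where
  "wfun v0 x = inverse (\<Sum>k. real (Suc k) * v0 (Suc k) * exp (- real (Suc k) * x))"

definition winv :: "(nat \<Rightarrow> real) \<Rightarrow> real \<Rightarrow> real" where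
  "winv v0 T = (THE x. wfun v0 x = T)"

definition F0 :: "(nat \<Rightarrow> real) \<Rightarrow> real \<Rightarrow> real" where
  "F0 v0 T = (let x = winv v0 T in (\<Sum>k. v0 (Suc k) * (1 - exp (- real (Suc k) * x))))"

definition G0 :: "(nat \<Rightarrow> real) \<Rightarrow> real \<Rightarrow> real" where
  "G0 v0 T = T * F0 v0 T - winv v0 T"

end

theory Submission
  imports Defs
begin


locale crit =
  fixes v :: "real \<Rightarrow> nat \<Rightarrow> real"
  assumes ns: "in_Nstar (v 0)" and nz: "\<exists>k\<ge>1. v 0 k \<noteq> 0" and cs: "critical_solution v"
begin

abbreviation mu where "mu s \<equiv> m0 (v s)"
abbreviation M where "M \<equiv> m0 (v 0)"
definition G :: "nat \<Rightarrow> real \<Rightarrow> real" where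
  "G k s = real k / 2 * (\<Sum>l=1..k-1. v s l * v s (k - l))"
definition fk :: "nat \<Rightarrow> real \<Rightarrow> real" where
  "fk k s = real k / 2 * (\<Sum>l=1..k-1. v s l * v s (k - l)) - real k * v s k * m0 (v s)"

lemma fk_G: "fk k s = G k s - real k * v s k * mu s"
  by (simp add: fk_def G_def)

lemma inN: "s \<ge> 0 \<Longrightarrow> in_N (v s)"
  using cs by (simp add: critical_solution_def)

lemma vnn: "s \<ge> 0 \<Longrightarrow> k \<ge> 1 \<Longrightarrow> 0 \<le> v s k"
  using inN by (simp add: in_N_def)

lemma vsum: "s \<ge> 0 \<Longrightarrow> summable (\<lambda>k. v s (Suc k))"
  using inN by (simp add: in_N_def)

lemma mu_eq: "mu s = (\<Sum>k. v s (Suc k))"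
  by (simp add: m0_def)

lemma v_le_mu: assumes "s \<ge> 0" "k \<ge> 1" shows "v s k \<le> mu s"
proof -
  obtain j where j: "k = Suc j" using assms(2) by (cases k) auto
  have "sum (\<lambda>k. v s (Suc k)) {j} \<le> (\<Sum>k. v s (Suc k))"
    by (rule sum_le_suminf) (use vsum[OF assms(1)] vnn[OF assms(1)] in auto)
  then show ?thesis using j by (simp add: mu_eq)
qed

lemma Phi_range: "s \<ge> 0 \<Longrightarrow> M - mu s \<in> {0..<M}"
  using cs by (simp add: critical_solution_def)

lemma M_pos: "M > 0" using Phi_range[of 0] by simp

lemma mu_pos: "s \<ge> 0 \<Longrightarrow> 0 < mu s" using Phi_range[of s] by simp
lemma mu_le_M: "s \<ge> 0 \<Longrightarrow> mu s \<le> M" using Phi_range[of s] by simp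

lemma Phi_mono: "mono_on {0..} (\<lambda>t. M - mu t)"
  using cs by (simp add: critical_solution_def)

lemma mu_anti: "0 \<le> a \<Longrightarrow> a \<le> b \<Longrightarrow> mu b \<le> mu a"
  using Phi_mono by (auto simp: mono_on_def)

lemma v_le_M: "s \<ge> 0 \<Longrightarrow> k \<ge> 1 \<Longrightarrow> v s k \<le> M"
  using v_le_mu mu_le_M by fastforce

lemma fk_int0: "t \<ge> 0 \<Longrightarrow> k \<ge> 1 \<Longrightarrow> (fk k has_integral (v t k - v 0 k)) {0..t}"
  using cs unfolding critical_solution_def fk_def by blast

lemma fk_integrable: "0 \<le> a \<Longrightarrow> a \<le> b \<Longrightarrow> k \<ge> 1 \<Longrightarrow> fk k integrable_on {a..b}"
  using fk_int0[of b k] integrable_subinterval_real[of "fk k" 0 b a b] by auto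

lemma v_int: assumes "0 \<le> a" "a \<le> b" "k \<ge> 1"
  shows "v b k - v a k = integral {a..b} (fk k)"
proof -
  have "integral {0..a} (fk k) + integral {a..b} (fk k) = integral {0..b} (fk k)"
    using Henstock_Kurzweil_Integration.integral_combine[where a=0 and c=a and b=b and f="fk k"] assms fk_integrable[of 0 b k] by auto
  moreover have "integral {0..a} (fk k) = v a k - v 0 k" using fk_int0[of a k] assms by auto
  moreover have "integral {0..b} (fk k) = v b k - v 0 k" using fk_int0[of b k] assms by auto
  ultimately show ?thesis by simp
qed

end


lemma rdi:
  fixes f :: "real \<Rightarrow> real"
  assumes fi: "f integrable_on {a..b}" and as: "a \<le> s" and sb: "s < b"
    and lim: "(f \<longlongrightarrow> L) (at_right s)"
  shows "((\<lambda>x. integral {a..x} f) has_real_derivative L) (at_right s)"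
proof -
  define g where "g r = (if r = s then L else f r)" for r
  have fi2: "f integrable_on {s..b}"
    using integrable_subinterval_real[OF fi] as sb by auto
  have gi: "g integrable_on {s..b}"
    by (rule integrable_spike_finite[of "{s}" _ _ f]) (use fi2 in \<open>auto simp: g_def\<close>)
  have ev: "eventually (\<lambda>r. f r = g r) (at_right s)"
    using eventually_at_right_less[of s] by eventually_elim (auto simp: g_def)
  have "(g \<longlongrightarrow> L) (at_right s)"
    using tendsto_cong[OF ev] lim by simp
  then have "continuous (at s within ({s..b} - {})) g"
    using sb by (simp add: continuous_within at_within_Icc_at_right g_def)
  from integral_has_vector_derivative_continuous_at[OF gi _ _ this] sb
  have "((\<lambda>u. integral {s..u} g) has_vector_derivative g s) (at s within ({s..b} - {}))"
    by auto
  then have d1: "((\<lambda>u. integral {s..u} g) has_real_derivative L) (at_right s)"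
    using sb by (simp add: has_real_derivative_iff_has_vector_derivative at_within_Icc_at_right g_def)
  have d2: "((\<lambda>u. integral {a..s} f + integral {s..u} g) has_real_derivative L) (at_right s)"
    using DERIV_add[OF DERIV_const d1] by simp
  have ev2: "eventually (\<lambda>u. integral {a..s} f + integral {s..u} g = integral {a..u} f) (at_right s)"
    using eventually_at_right_real[OF sb]
  proof eventually_elim
    case (elim u)
    have "integral {s..u} g = integral {s..u} f"
      by (rule integral_spike[of "{s}"]) (auto simp: g_def)
    moreover have "integral {a..s} f + integral {s..u} f = integral {a..u} f"
      using Henstock_Kurzweil_Integration.integral_combine[where a=a and c=s and b=u and f=f]
        integrable_subinterval_real[OF fi, of a u] as elim by auto
    ultimately show ?case by simp
  qed
  have "integral {a..s} f + integral {s..s} g = integral {a..s} f" by simp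
  from has_field_derivative_cong_eventually[OF ev2 this] d2 show ?thesis by simp
qed

lemma deriv_right_mono:
  fixes f :: "real \<Rightarrow> real"
  assumes ab: "a \<le> b" and cont: "continuous_on {a..b} f"
    and der: "\<And>x. x \<in> {a..<b} \<Longrightarrow> \<exists>D. (f has_real_derivative D) (at_right x) \<and> D \<le> 0"
  shows "f b \<le> f a"
proof -
  have key: "f b \<le> f a + e * (b - a)" if e: "e > 0" for e
  proof -
    define S where "S = {x\<in>{a..b}. f x \<le> f a + e * (x - a)}"
    have aS: "a \<in> S" using ab by (simp add: S_def)
    have cS: "closed S"
    proof -
      have "S = {a..b} \<inter> (\<lambda>x. f x - e * (x - a)) -` {..f a}"
        by (auto simp: S_def algebra_simps)
      moreover have "closed ({a..b} \<inter> (\<lambda>x. f x - e * (x - a)) -` {..f a})"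
        by (rule continuous_closed_preimage) (auto intro!: continuous_intros cont)
      ultimately show ?thesis by simp
    qed
    have bdd: "bdd_above S" by (auto simp: S_def bdd_above_def)
    define m where "m = Sup S"
    have mS: "m \<in> S" unfolding m_def using closed_contains_Sup[of S] aS cS bdd by auto
    have "m = b"
    proof (rule ccontr)
      assume "m \<noteq> b"
      with mS have mb: "m < b" "a \<le> m" by (auto simp: S_def)
      obtain D where D: "(f has_real_derivative D) (at_right m)" "D \<le> 0"
        using der[of m] mb by auto
      then have "((\<lambda>y. (f y - f m) / (y - m)) \<longlongrightarrow> D) (at_right m)"
        by (simp add: has_field_derivative_iff)
      then have "eventually (\<lambda>y. (f y - f m) / (y - m) < e) (at_right m)"
        using D(2) e by (auto simp: order_tendsto_iff)
      then obtain c where c: "c > m" "\<And>y. y > m \<Longrightarrow> y < c \<Longrightarrow> (f y - f m) / (y - m) < e"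
        by (auto simp: eventually_at_right_field)
      define y where "y = min (m + (c - m)/2) b"
      have y: "y > m" "y < c" "y \<le> b" using c mb by (auto simp: y_def min_def field_simps)
      have "(f y - f m) < e * (y - m)" using c(2)[OF y(1,2)] y(1) by (simp add: divide_less_eq)
      moreover have "f m \<le> f a + e * (m - a)" using mS by (simp add: S_def)
      ultimately have "y \<in> S" using y mb by (simp add: S_def algebra_simps)
      then have "y \<le> m" unfolding m_def by (rule cSup_upper[OF _ bdd])
      with y show False by simp
    qed
    with mS show ?thesis by (simp add: S_def)
  qed
  then show ?thesis
  proof (cases "a = b")
    case False
    with ab have "b - a > 0" by simp
    show ?thesis
    proof (rule ccontr)
      assume nt: "\<not> ?thesis"
      then have e: "(f b - f a) / (2*(b - a)) > 0" using \<open>b - a > 0\<close> by simp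
      have eq: "(f b - f a) / (2*(b - a)) * (b - a) = (f b - f a) / 2" using \<open>b - a > 0\<close> by (auto simp: field_simps)
      from key[OF e, unfolded eq] nt show False by (simp add: field_simps)
    qed
  qed simp
qed

context crit begin

lemma conv_le: assumes "s \<ge> 0" shows "(\<Sum>l=1..k-1. v s l * v s (k - l)) \<le> real k * M^2"
  and "0 \<le> (\<Sum>l=1..k-1. v s l * v s (k - l))"
proof -
  have "(\<Sum>l=1..k-1. v s l * v s (k - l)) \<le> (\<Sum>l=1..k-1. M * M)"
    by (rule sum_mono) (use M_pos in \<open>auto intro!: mult_mono v_le_M vnn assms\<close>)
  also have "\<dots> \<le> real k * M^2" using M_pos by (simp add: power2_eq_square mult_right_mono)
  finally show "(\<Sum>l=1..k-1. v s l * v s (k - l)) \<le> real k * M^2" .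
  show "0 \<le> (\<Sum>l=1..k-1. v s l * v s (k - l))"
    by (rule sum_nonneg) (auto intro!: mult_nonneg_nonneg vnn assms)
qed

lemma G_nn: "s \<ge> 0 \<Longrightarrow> 0 \<le> G k s"
  using conv_le(2) by (simp add: G_def)

lemma G_le: "s \<ge> 0 \<Longrightarrow> G k s \<le> real k ^ 2 * M^2"
proof -
  assume s: "s \<ge> 0"
  have "G k s \<le> real k / 2 * (real k * M^2)"
    unfolding G_def by (rule mult_left_mono[OF conv_le(1)[OF s]]) simp
  also have "\<dots> \<le> real k ^ 2 * M^2" by (simp add: power2_eq_square)
  finally show ?thesis .
qed

lemma fk_bound: assumes "s \<ge> 0" "k \<ge> 1" shows "\<bar>fk k s\<bar> \<le> 2 * real k ^ 2 * M^2"
proof -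
  have a: "0 \<le> real k * v s k * mu s" using vnn[OF assms] mu_pos[OF assms(1)] by simp
  have "real k * v s k * mu s \<le> real k * M * M"
    using v_le_M[OF assms] mu_le_M[OF assms(1)] vnn[OF assms] mu_pos[OF assms(1)]
    by (intro mult_mono) auto
  also have "\<dots> \<le> real k ^ 2 * M^2" using assms M_pos
    by (simp add: power2_eq_square mult_right_mono)
  finally have b: "real k * v s k * mu s \<le> real k ^ 2 * M^2" .
  show ?thesis using G_nn[OF assms(1), of k] G_le[OF assms(1), of k] a b
    by (simp add: fk_G abs_le_iff)
qed

lemma fk_lo: "s \<ge> 0 \<Longrightarrow> k \<ge> 1 \<Longrightarrow> -(2 * real k ^ 2 * M^2) \<le> fk k s"
  using fk_bound[of s k] by (simp add: abs_le_iff)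

lemma v_lip: assumes "0 \<le> a" "a \<le> b" "k \<ge> 1"
  shows "\<bar>v b k - v a k\<bar> \<le> 2 * real k ^ 2 * M^2 * (b - a)"
proof -
  let ?C = "2 * real k ^ 2 * M^2"
  have i: "fk k integrable_on {a..b}" using fk_integrable assms by auto
  have "integral {a..b} (fk k) \<le> integral {a..b} (\<lambda>_. ?C)"
    by (rule integral_le[OF i]) (use fk_bound assms in \<open>auto simp: abs_le_iff\<close>)
  moreover have "integral {a..b} (\<lambda>_. - ?C) \<le> integral {a..b} (fk k)"
    by (rule integral_le[OF _ i]) (use fk_lo assms in auto)
  ultimately show ?thesis using v_int[OF assms] assms by (auto simp: abs_le_iff field_simps)
qed

lemma v_cont: "k \<ge> 1 \<Longrightarrow> continuous_on {0..} (\<lambda>s. v s k)"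
proof -
  assume k: "k \<ge> 1"
  have "(2 * real k ^ 2 * M^2)-lipschitz_on {0..} (\<lambda>s. v s k)"
  proof (rule lipschitz_onI)
    fix x y :: real assume xy: "x \<in> {0..}" "y \<in> {0..}"
    show "dist (v x k) (v y k) \<le> 2 * real k ^ 2 * M^2 * dist x y"
    proof (cases "x \<le> y")
      case True then show ?thesis using v_lip[of x y k] xy k by (simp add: dist_real_def abs_minus_commute)
    next
      case False then show ?thesis using v_lip[of y x k] xy k by (simp add: dist_real_def)
    qed
  qed simp
  then show ?thesis by (rule lipschitz_on_continuous_on)
qed

lemma mu_integrable: "0 \<le> a \<Longrightarrow> mu integrable_on {a..b}"
proof -
  assume a: "0 \<le> a"
  have "mono_on {a..b} (\<lambda>t. M - mu t)"
    by (rule mono_on_subset[OF Phi_mono]) (use a in auto)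
  then have "(\<lambda>t. M - mu t) integrable_on {a..b}" by (rule integrable_on_mono_on)
  moreover have "(\<lambda>t. M) integrable_on {a..b}" using integrable_const[of M a b] by simp
  ultimately have "(\<lambda>t. M - (M - mu t)) integrable_on {a..b}"
    using integrable_diff by blast
  moreover have "(\<lambda>t. M - (M - mu t)) = mu" by auto
  ultimately show ?thesis by simp
qed

definition J :: "real \<Rightarrow> real" where "J t = integral {0..t} mu"

lemma J0: "J 0 = 0" by (simp add: J_def)

lemma J_diff: "0 \<le> a \<Longrightarrow> a \<le> b \<Longrightarrow> J b - J a = integral {a..b} mu"
  unfolding J_def
  using Henstock_Kurzweil_Integration.integral_combine[where a=0 and c=a and b=b and f=mu]
    mu_integrable[of 0 b] by auto

lemma J_bounds: assumes "0 \<le> a" "a \<le> b"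
  shows "(b - a) * mu b \<le> J b - J a" "J b - J a \<le> (b - a) * mu a"
proof -
  have "integral {a..b} (\<lambda>_. mu b) \<le> integral {a..b} mu"
    by (rule integral_le) (use mu_integrable assms mu_anti in auto)
  then show "(b - a) * mu b \<le> J b - J a" using J_diff[OF assms] assms by simp
  have "integral {a..b} mu \<le> integral {a..b} (\<lambda>_. mu a)"
    by (rule integral_le) (use mu_integrable assms mu_anti in auto)
  then show "J b - J a \<le> (b - a) * mu a" using J_diff[OF assms] assms by simp
qed

lemma J_cont: "continuous_on {0..} J"
proof -
  have "M-lipschitz_on {0..} J"
  proof (rule lipschitz_onI)
    fix x y :: real assume xy: "x \<in> {0..}" "y \<in> {0..}"
    have *: "0 \<le> J b - J a \<and> J b - J a \<le> M * (b - a)" if "0 \<le> a" "a \<le> b" for a b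
    proof -
      have "0 \<le> (b - a) * mu b" using mu_pos[of b] that by simp
      moreover have "(b - a) * mu a \<le> M * (b - a)" using mu_le_M[of a] that by (simp add: mult_right_mono mult.commute)
      ultimately show ?thesis using J_bounds[OF that] by linarith
    qed
    show "dist (J x) (J y) \<le> M * dist x y"
    proof (cases "x \<le> y")
      case True then show ?thesis using *[of x y] xy by (simp add: dist_real_def abs_minus_commute)
    next
      case False then show ?thesis using *[of y x] xy by (simp add: dist_real_def)
    qed
  qed (use M_pos in simp)
  then show ?thesis by (rule lipschitz_on_continuous_on)
qed

definition mur :: "real \<Rightarrow> real" where "mur s = Sup (mu ` {s<..})"

lemma mur_lim: assumes s: "s \<ge> 0" shows "(mu \<longlongrightarrow> mur s) (at_right s)"
proof -
  have bdd: "bdd_above (mu ` {s<..})"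
    using mu_le_M s by (auto simp: bdd_above_def intro!: exI[of _ M])
  have ne: "mu ` {s<..} \<noteq> {}" by auto
  show ?thesis
  proof (rule order_tendstoI)
    fix a assume "a < mur s"
    then obtain r where r: "r > s" "a < mu r" using less_cSup_iff[OF ne bdd] by (auto simp: mur_def)
    show "eventually (\<lambda>x. a < mu x) (at_right s)"
      unfolding eventually_at_right_field
      using r s mu_anti by (intro exI[of _ r]) (auto intro: less_le_trans)
  next
    fix a assume "mur s < a"
    show "eventually (\<lambda>x. mu x < a) (at_right s)"
      using eventually_at_right_less[of s]
    proof eventually_elim
      case (elim x)
      then have "mu x \<le> mur s" unfolding mur_def by (intro cSup_upper[OF _ bdd]) auto
      then show ?case using \<open>mur s < a\<close> by simp
    qed
  qed
qed

lemma J_deriv: "s \<ge> 0 \<Longrightarrow> (J has_real_derivative mur s) (at_right s)"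
  unfolding J_def by (rule rdi[OF mu_integrable[of 0 "s+1"]]) (auto intro: mur_lim)

lemma G_cont: "continuous_on {0..} (G k)"
  unfolding G_def
  by (intro continuous_intros continuous_on_sum ballI) (auto intro!: v_cont)

lemma v_deriv: assumes s: "s \<ge> 0" and k: "k \<ge> 1"
  shows "((\<lambda>r. v r k) has_real_derivative (G k s - real k * v s k * mur s)) (at_right s)"
proof -
  have lim: "(fk k \<longlongrightarrow> G k s - real k * v s k * mur s) (at_right s)"
  proof -
    have "((\<lambda>r. G k r) \<longlongrightarrow> G k s) (at_right s)"
      using G_cont[of k] s by (auto simp: continuous_on_def intro: tendsto_within_subset)
    moreover have "((\<lambda>r. v r k) \<longlongrightarrow> v s k) (at_right s)"
      using v_cont[OF k] s by (auto simp: continuous_on_def intro: tendsto_within_subset)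
    ultimately show ?thesis unfolding fk_G
      by (intro tendsto_intros mur_lim s)
  qed
  have d: "((\<lambda>r. v 0 k + integral {0..r} (fk k)) has_real_derivative (G k s - real k * v s k * mur s)) (at_right s)"
    using DERIV_add[OF DERIV_const rdi[OF fk_integrable[of 0 "s+1" k] _ _ lim]] s k by simp
  have ev: "eventually (\<lambda>r. v 0 k + integral {0..r} (fk k) = v r k) (at_right s)"
    using eventually_at_right_less[of s]
  proof eventually_elim
    case (elim r) with s k v_int[of 0 r k] show ?case by simp
  qed
  have "v 0 k + integral {0..s} (fk k) = v s k" using s k v_int[of 0 s k] by auto
  from has_field_derivative_cong_eventually[OF ev this] d show ?thesis by simp
qed

end


lemma summ_lin_geom: assumes "0 \<le> r" "r < 1"
  shows "summable (\<lambda>n. real (Suc n) * r ^ n)"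
proof -
  have "summable (\<lambda>n. diffs (\<lambda>_. 1::real) n * r ^ n)"
    by (rule termdiff_converges[where K=1]) (use assms in \<open>auto intro!: summable_geometric\<close>)
  then show ?thesis by (simp add: diffs_def)
qed

lemma summ_quad_geom: assumes "0 \<le> r" "r < 1"
  shows "summable (\<lambda>k. real (Suc k) ^ 2 * r ^ Suc k)"
proof -
  have "summable (\<lambda>n. diffs (\<lambda>n. real (Suc n)) n * r ^ n)"
  proof (rule termdiff_converges[where K=1])
    fix x :: real assume x: "norm x < 1"
    have "summable (\<lambda>n. real (Suc n) * \<bar>x\<bar> ^ n)" using x by (intro summ_lin_geom) auto
    then have "summable (\<lambda>n. \<bar>real (Suc n) * x ^ n\<bar>)" by (simp add: abs_mult power_abs)
    then show "summable (\<lambda>n. real (Suc n) * x ^ n)" by (rule summable_rabs_cancel)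
  qed (use assms in auto)
  then have s: "summable (\<lambda>n. real (Suc n) * real (Suc (Suc n)) * r ^ n)"
    by (simp add: diffs_def)
  show ?thesis
  proof (rule summable_comparison_test'[OF s])
    fix n :: nat
    have "real (Suc n) ^ 2 * r ^ Suc n \<le> real (Suc n) * real (Suc (Suc n)) * r ^ n"
    proof -
      have "real (Suc n) ^ 2 * r ^ Suc n = (real (Suc n) * real (Suc n) * r) * r ^ n"
        by (simp add: power2_eq_square)
      also have "\<dots> \<le> (real (Suc n) * real (Suc (Suc n))) * r ^ n"
      proof (intro mult_right_mono)
        have "real (Suc n) * r \<le> real (Suc n)" using assms by (intro mult_left_le) auto
        then have "real (Suc n) * r \<le> real (Suc (Suc n))" by linarith
        then have "real (Suc n) * (real (Suc n) * r) \<le> real (Suc n) * real (Suc (Suc n))"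
          by (rule mult_left_mono) simp
        then show "real (Suc n) * real (Suc n) * r \<le> real (Suc n) * real (Suc (Suc n))"
          by (simp add: mult.assoc)
      qed (use assms in auto)
      finally show ?thesis .
    qed
    then show "norm (real (Suc n) ^ 2 * r ^ Suc n) \<le> real (Suc n) * real (Suc (Suc n)) * r ^ n"
      using assms by simp
  qed
qed

lemma exp_neg_pow: "exp (- real n * z) = exp (- z) ^ n"
  using exp_of_nat_mult[of n "-z"] by simp

lemma exp_diff_bound:
  fixes c a b eta :: real
  assumes "c \<ge> 0" "a \<ge> eta" "b \<ge> eta"
  shows "\<bar>exp (- c * a) - exp (- c * b)\<bar> \<le> c * exp (- c * eta) * \<bar>a - b\<bar>"
proof -
  have *: "exp (- c * a) - exp (- c * b) \<le> c * exp (- c * eta) * (b - a)"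
    if "a \<le> b" "a \<ge> eta" for a b
  proof -
    have "exp (- c * a) - exp (- c * b) = exp (- c * a) * (1 - exp (- (c * (b - a))))"
      by (simp add: algebra_simps flip: exp_add)
    also have "\<dots> \<le> exp (- c * a) * (c * (b - a))"
      using exp_ge_add_one_self[of "- (c * (b - a))"] by (intro mult_left_mono) auto
    also have "\<dots> \<le> exp (- c * eta) * (c * (b - a))"
      using that assms(1) by (intro mult_right_mono) (auto simp: mult_left_mono)
    finally show ?thesis by (simp add: algebra_simps)
  qed
  have m1: "exp (- c * b) \<le> exp (- c * a)" if "a \<le> b" for a b
    using that assms(1) by (simp add: mult_left_mono)
  show ?thesis
  proof (cases "a \<le> b")
    case True
    with *[OF True assms(2)] m1[OF True] show ?thesis by (simp add: abs_if)
  next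
    case False
    with *[of b a] assms(3) m1[of b a] show ?thesis by (simp add: abs_if)
  qed
qed

lemma sum_reflect_weight:
  fixes f :: "nat \<Rightarrow> real"
  shows "(\<Sum>i=1..n-1. real i * f i * f (n - i)) = real n / 2 * (\<Sum>l=1..n-1. f l * f (n - l))"
proof -
  have r: "(\<Sum>i=1..n-1. real i * f i * f (n - i)) = (\<Sum>i=1..n-1. real (n - i) * f (n - i) * f i)"
  proof (rule sum.reindex_bij_witness[where i="\<lambda>i. n - i" and j="\<lambda>i. n - i"])
  qed auto
  have "2 * (\<Sum>i=1..n-1. real i * f i * f (n - i)) =
        (\<Sum>i=1..n-1. real i * f i * f (n - i)) + (\<Sum>i=1..n-1. real (n - i) * f (n - i) * f i)"
    using r by simp
  also have "\<dots> = (\<Sum>i=1..n-1. real n * (f i * f (n - i)))"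
    unfolding sum.distrib[symmetric]
    by (rule sum.cong) (auto simp: of_nat_diff algebra_simps)
  also have "\<dots> = real n * (\<Sum>l=1..n-1. f l * f (n - l))" by (simp add: sum_distrib_left)
  finally show ?thesis by (simp add: field_simps)
qed

context crit begin

definition P :: "real \<Rightarrow> real \<Rightarrow> real" where
  "P s z = (\<Sum>k. v s (Suc k) * exp (- real (Suc k) * z))"
definition Dser :: "real \<Rightarrow> real \<Rightarrow> real" where
  "Dser s z = (\<Sum>k. real (Suc k) * v s (Suc k) * exp (- real (Suc k) * z))"

lemma term_bound: assumes "s \<ge> 0" "z \<ge> eta"
  shows "\<bar>v s (Suc k) * exp (- real (Suc k) * z)\<bar> \<le> M * exp (- eta) ^ Suc k"
proof -
  have "exp (- real (Suc k) * z) \<le> exp (- real (Suc k) * eta)"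
    using assms(2) by (simp add: mult_left_mono)
  also have "exp (- real (Suc k) * eta) = exp (- eta) ^ Suc k" by (rule exp_neg_pow)
  finally have "exp (- real (Suc k) * z) \<le> exp (- eta) ^ Suc k" .
  then show ?thesis using vnn[OF assms(1), of "Suc k"] v_le_M[OF assms(1), of "Suc k"]
    by (simp add: abs_mult mult_mono)
qed

lemma P_summable: "s \<ge> 0 \<Longrightarrow> z > 0 \<Longrightarrow> summable (\<lambda>k. v s (Suc k) * exp (- real (Suc k) * z))"
proof -
  assume s: "s \<ge> 0" and z: "z > 0"
  have g: "summable (\<lambda>k. M * exp (- z) ^ Suc k)"
    using z by (intro summable_mult summable_geometric[THEN summable_Suc_iff[THEN iffD2]]) auto
  show ?thesis
    by (rule summable_comparison_test'[OF g]) (use term_bound[OF s, of z z] in auto)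
qed

lemma Dser_summable: "s \<ge> 0 \<Longrightarrow> z > 0 \<Longrightarrow> summable (\<lambda>k. real (Suc k) * v s (Suc k) * exp (- real (Suc k) * z))"
proof -
  assume s: "s \<ge> 0" and z: "z > 0"
  show ?thesis
  proof (rule summable_comparison_test'[where g="\<lambda>k. M * (real (Suc k) ^ 2 * exp (- z) ^ Suc k)"])
    show "summable (\<lambda>k. M * (real (Suc k) ^ 2 * exp (- z) ^ Suc k))"
      using z by (intro summable_mult summ_quad_geom) auto
    fix n
    have "norm (real (Suc n) * v s (Suc n) * exp (- real (Suc n) * z)) =
          real (Suc n) * \<bar>v s (Suc n) * exp (- real (Suc n) * z)\<bar>" by (simp add: abs_mult)
    also have "\<dots> \<le> real (Suc n) * (M * exp (- z) ^ Suc n)"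
      by (intro mult_left_mono term_bound) (use s in auto)
    also have "\<dots> \<le> M * (real (Suc n) ^ 2 * exp (- z) ^ Suc n)"
      using M_pos by (simp add: power2_eq_square mult_right_mono)
    finally show "norm (real (Suc n) * v s (Suc n) * exp (- real (Suc n) * z))
       \<le> M * (real (Suc n) ^ 2 * exp (- z) ^ Suc n)" .
  qed
qed

lemma cauchy_identity: assumes s: "s \<ge> 0" and z: "z > 0"
  shows "(\<lambda>k. G (Suc k) s * exp (- real (Suc k) * z)) sums (Dser s z * P s z)"
proof -
  define a where "a n = real n * v s n * exp (- real n * z)" for n
  define b where "b n = (if n = 0 then 0 else v s n * exp (- real n * z))" for n
  have sa: "summable (\<lambda>n. a (Suc n))" using Dser_summable[OF s z] by (simp add: a_def)
  have sb: "summable (\<lambda>n. b (Suc n))" using P_summable[OF s z] by (simp add: b_def)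
  have a0: "a 0 = 0" by (simp add: a_def)
  have b0: "b 0 = 0" by (simp add: b_def)
  have ann: "a n \<ge> 0" for n using vnn[OF s, of n] by (cases n) (auto simp: a_def)
  have bnn: "b n \<ge> 0" for n using vnn[OF s, of n] by (auto simp: b_def)
  have sa': "a sums Dser s z"
    using sa summable_sums[OF sa] sums_Suc_iff[of a] a0 by (simp add: Dser_def a_def)
  have sb': "b sums P s z"
    using sb summable_sums[OF sb] sums_Suc_iff[of b] b0 by (simp add: P_def b_def)
  have "(\<lambda>k. \<Sum>i\<le>k. a i * b (k - i)) sums ((\<Sum>k. a k) * (\<Sum>k. b k))"
    by (rule Cauchy_product_sums) (use sa' sb' ann bnn in \<open>auto simp: sums_iff\<close>)
  then have cp: "(\<lambda>k. \<Sum>i\<le>k. a i * b (k - i)) sums (Dser s z * P s z)"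
    using sa' sb' by (simp add: sums_iff)
  have eq: "(\<Sum>i\<le>n. a i * b (n - i)) = G n s * exp (- real n * z)" for n
  proof -
    have "(\<Sum>i\<le>n. a i * b (n - i)) = (\<Sum>i=1..n-1. a i * b (n - i))"
    proof (rule sum.mono_neutral_right)
      show "\<forall>i\<in>{..n} - {1..n - 1}. a i * b (n - i) = 0"
        by (auto simp: a_def b_def)
    qed auto
    also have "\<dots> = (\<Sum>i=1..n-1. real i * v s i * v s (n - i) * exp (- real n * z))"
    proof (rule sum.cong[OF refl])
      fix i assume i: "i \<in> {1..n-1}"
      then have "real (n - i) = real n - real i" by (subst of_nat_diff) auto
      then have "exp (- real i * z) * exp (- real (n - i) * z) = exp (- real n * z)"
        by (simp add: algebra_simps flip: exp_add)
      then show "a i * b (n - i) = real i * v s i * v s (n - i) * exp (- real n * z)"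
        using i by (auto simp: a_def b_def algebra_simps)
    qed
    also have "\<dots> = (\<Sum>i=1..n-1. real i * v s i * v s (n - i)) * exp (- real n * z)"
      by (simp add: sum_distrib_right)
    also have "\<dots> = G n s * exp (- real n * z)"
    proof -
      have h: "(\<Sum>i=1..n-1. real i * v s i * v s (n - i)) = real n / 2 * (\<Sum>l=1..n-1. v s l * v s (n - l))"
        by (rule sum_reflect_weight)
      show ?thesis unfolding h G_def ..
    qed
    finally show ?thesis .
  qed
  have "(\<lambda>k. G k s * exp (- real k * z)) sums (Dser s z * P s z)" using cp eq by simp
  then show ?thesis using sums_Suc_iff[of "\<lambda>k. G k s * exp (- real k * z)"] by (simp add: G_def)
qed

end


context crit begin

definition yy :: "real \<Rightarrow> real \<Rightarrow> real" where "yy x s = x + s * P 0 x - J s"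

lemma P_nonneg: "s \<ge> 0 \<Longrightarrow> z > 0 \<Longrightarrow> 0 \<le> P s z"
  unfolding P_def by (rule suminf_nonneg[OF P_summable]) (auto intro!: mult_nonneg_nonneg vnn)

lemma J_nonneg_incr: "0 \<le> a \<Longrightarrow> a \<le> b \<Longrightarrow> 0 \<le> J b - J a \<and> J b - J a \<le> M * (b - a)"
proof -
  assume that: "0 \<le> a" "a \<le> b"
  have "0 \<le> (b - a) * mu b" using mu_pos[of b] that by simp
  moreover have "(b - a) * mu a \<le> M * (b - a)" using mu_le_M[of a] that by (simp add: mult_right_mono mult.commute)
  ultimately show ?thesis using J_bounds[OF that] by linarith
qed

lemma core:
  assumes t: "0 \<le> t" and pos: "\<forall>s\<in>{0..t}. yy x s > 0"
  shows "P t (yy x t) = P 0 x"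
proof -
  define u where "u = P 0 x"
  define y where "y = yy x"
  have y_eq: "y s = x + s * u - J s" for s by (simp add: y_def yy_def u_def)
  have x: "x > 0" using pos t by (auto simp: yy_def J0 dest: bspec[of _ _ 0])
  have u0: "u \<ge> 0" unfolding u_def using P_nonneg[of 0 x] x by simp
  have ycont: "continuous_on {0..t} y"
    unfolding y_eq[abs_def]
    by (intro continuous_intros continuous_on_subset[OF J_cont]) auto
  obtain s0 where s0: "s0 \<in> {0..t}" "\<And>s. s \<in> {0..t} \<Longrightarrow> y s0 \<le> y s"
    using continuous_attains_inf[OF compact_Icc _ ycont] t by auto
  define eta where "eta = y s0"
  have eta: "eta > 0" using pos s0 by (simp add: eta_def y_def)
  have yeta: "s \<in> {0..t} \<Longrightarrow> eta \<le> y s" for s using s0 by (simp add: eta_def)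
  define r where "r = exp (- eta)"
  have r: "0 \<le> r" "r < 1" using eta by (auto simp: r_def)
  define tm where "tm k s = v s (Suc k) * exp (- real (Suc k) * y s)" for k s
  define Q where "Q s = (\<Sum>k. tm k s)" for s
  have Q_eq: "Q s = P s (y s)" for s by (simp add: Q_def tm_def P_def)
  have tm_bd: "\<bar>tm k s\<bar> \<le> M * r ^ Suc k" if "s \<in> {0..t}" for k s
    unfolding tm_def r_def using term_bound[of s eta "y s" k] that yeta[OF that] by auto
  have gsum: "summable (\<lambda>k. M * r ^ Suc k)"
    using r by (intro summable_mult summable_geometric[THEN summable_Suc_iff[THEN iffD2]]) auto
  have tm_summ: "summable (\<lambda>k. tm k s)" if "s \<in> {0..t}" for s
    by (rule summable_comparison_test'[OF gsum]) (use tm_bd[OF that] in auto)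
  have tm_cont: "continuous_on {0..t} (tm k)" for k
    unfolding tm_def
    by (intro continuous_intros continuous_on_subset[OF v_cont] ycont) auto
  have Qcont: "continuous_on {0..t} Q"
  proof (rule uniform_limit_theorem)
    show "uniform_limit {0..t} (\<lambda>n s. \<Sum>i<n. tm i s) Q sequentially"
      unfolding Q_def by (rule Weierstrass_m_test[OF _ gsum]) (use tm_bd in auto)
    show "\<forall>\<^sub>F n in sequentially. continuous_on {0..t} (\<lambda>s. \<Sum>i<n. tm i s)"
      by (intro always_eventually allI continuous_on_sum tm_cont)
  qed simp
  define B where "B = (\<Sum>k. M * (real (Suc k) ^ 2 * r ^ Suc k))"
  have qsum: "summable (\<lambda>k. M * (real (Suc k) ^ 2 * r ^ Suc k))"
    using r by (intro summable_mult summ_quad_geom) auto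
  have Dbd: "Dser s (y s) \<le> B" if "s \<in> {0..t}" for s
  proof -
    have ys: "y s > 0" using yeta[OF that] eta by simp
    show ?thesis unfolding Dser_def B_def
    proof (rule suminf_le[OF _ Dser_summable qsum])
      fix k
      have "real (Suc k) * v s (Suc k) * exp (- real (Suc k) * y s) = real (Suc k) * tm k s"
        by (simp add: tm_def)
      also have "\<dots> \<le> real (Suc k) * (M * r ^ Suc k)"
        using tm_bd[OF that, of k] by (intro mult_left_mono) auto
      also have "\<dots> \<le> M * (real (Suc k) ^ 2 * r ^ Suc k)"
      proof -
        have h1: "real (Suc k) \<le> real (Suc k) ^ 2" by (simp add: power2_eq_square)
        have "real (Suc k) * (M * r ^ Suc k) \<le> real (Suc k) ^ 2 * (M * r ^ Suc k)"
          by (rule mult_right_mono[OF h1]) (use M_pos r in simp)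
        then show ?thesis by (simp add: algebra_simps)
      qed
      finally show "real (Suc k) * v s (Suc k) * exp (- real (Suc k) * y s) \<le> M * (real (Suc k) ^ 2 * r ^ Suc k)" .
    qed (use that ys in auto)
  qed
  have Qder: "(Q has_real_derivative (Dser s (y s) * (Q s - u))) (at_right s)" if s: "s \<in> {0..<t}" for s
  proof -
    have s0: "0 \<le> s" "s < t" using s by auto
    have ys: "y s > 0" using yeta[of s] eta s by simp
    have yd: "(y has_real_derivative (u - mur s)) (at_right s)"
      unfolding y_eq[abs_def]
      by (rule derivative_eq_intros J_deriv refl | use s0 in simp)+
    define c where "c k = G (Suc k) s * exp (- real (Suc k) * y s)
        - u * (real (Suc k) * v s (Suc k) * exp (- real (Suc k) * y s))" for k
    have tmd: "(tm k has_real_derivative c k) (at_right s)" for k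
    proof -
      have vd: "((\<lambda>h. v h (Suc k)) has_real_derivative (G (Suc k) s - real (Suc k) * v s (Suc k) * mur s)) (at_right s)"
        using v_deriv[OF s0(1), of "Suc k"] by simp
      have ed: "((\<lambda>h. exp (- real (Suc k) * y h)) has_real_derivative
                  exp (- real (Suc k) * y s) * (- real (Suc k) * (u - mur s))) (at_right s)"
        by (rule DERIV_chain2[OF DERIV_exp]) (rule derivative_eq_intros yd refl | simp)+
      have "(tm k has_real_derivative
              (G (Suc k) s - real (Suc k) * v s (Suc k) * mur s) * exp (- real (Suc k) * y s)
              + exp (- real (Suc k) * y s) * (- real (Suc k) * (u - mur s)) * v s (Suc k)) (at_right s)"
        unfolding tm_def[abs_def] by (rule DERIV_mult[OF vd ed])
      moreover have "(G (Suc k) s - real (Suc k) * v s (Suc k) * mur s) * exp (- real (Suc k) * y s)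
              + exp (- real (Suc k) * y s) * (- real (Suc k) * (u - mur s)) * v s (Suc k) = c k"
        by (simp add: c_def algebra_simps)
      ultimately show ?thesis by simp
    qed
    define a where "a k h = (tm k h - tm k s) / (h - s)" for k h
    have alim: "((\<lambda>h. a k h) \<longlongrightarrow> c k) (at_right s)" for k
      using tmd[of k] unfolding has_field_derivative_iff a_def by simp
    define Bd where "Bd k = (2 * M^2 + M * (u + M)) * (real (Suc k) ^ 2 * r ^ Suc k)" for k
    have Bdsum: "summable Bd"
      unfolding Bd_def using r by (intro summable_mult summ_quad_geom) auto
    have abd: "\<bar>a k h\<bar> \<le> Bd k" if h: "h \<in> {s<..<t}" for k h
    proof -
      have h0: "0 \<le> h" "s < h" "h \<le> t" using h s0 by auto
      let ?e = "\<lambda>z. exp (- real (Suc k) * z)"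
      have yh: "eta \<le> y h" "eta \<le> y s" using yeta h0 s0 by auto
      have ydiff: "\<bar>y h - y s\<bar> \<le> (u + M) * (h - s)"
      proof -
        have e: "y h - y s = (h - s) * u - (J h - J s)" by (simp add: y_eq algebra_simps)
        have j: "0 \<le> J h - J s" "J h - J s \<le> M * (h - s)" using J_nonneg_incr[of s h] h0 s0 by auto
        have p: "0 \<le> (h - s) * u" using h0 u0 by simp
        have q: "(u + M) * (h - s) = (h - s) * u + M * (h - s)" by (simp add: algebra_simps)
        show ?thesis unfolding abs_le_iff q using e j p by (intro conjI; linarith)
      qed
      have e_h: "?e (y h) \<le> r ^ Suc k"
      proof -
        have "?e (y h) \<le> exp (- real (Suc k) * eta)" using yh by (simp add: mult_left_mono)
        also have "\<dots> = r ^ Suc k" unfolding r_def by (rule exp_neg_pow)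
        finally show ?thesis .
      qed
      have ed: "\<bar>?e (y h) - ?e (y s)\<bar> \<le> real (Suc k) * r ^ Suc k * ((u + M) * (h - s))"
      proof -
        have "\<bar>?e (y h) - ?e (y s)\<bar> \<le> real (Suc k) * exp (- real (Suc k) * eta) * \<bar>y h - y s\<bar>"
          by (rule exp_diff_bound) (use yh in auto)
        also have "\<dots> \<le> real (Suc k) * exp (- real (Suc k) * eta) * ((u + M) * (h - s))"
          by (intro mult_left_mono ydiff) auto
        also have "exp (- real (Suc k) * eta) = r ^ Suc k" unfolding r_def by (rule exp_neg_pow)
        finally show ?thesis .
      qed
      have vd: "\<bar>v h (Suc k) - v s (Suc k)\<bar> \<le> 2 * real (Suc k) ^ 2 * M^2 * (h - s)"
        using v_lip[of s h "Suc k"] h0 s0 by simp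
      have "tm k h - tm k s = (v h (Suc k) - v s (Suc k)) * ?e (y h) + v s (Suc k) * (?e (y h) - ?e (y s))"
        by (simp add: tm_def algebra_simps)
      then have "\<bar>tm k h - tm k s\<bar> \<le> \<bar>v h (Suc k) - v s (Suc k)\<bar> * ?e (y h) + v s (Suc k) * \<bar>?e (y h) - ?e (y s)\<bar>"
        using vnn[OF s0(1), of "Suc k"] by (simp add: abs_mult abs_triangle_ineq[THEN order_trans])
      also have "\<dots> \<le> (2 * real (Suc k) ^ 2 * M^2 * (h - s)) * r ^ Suc k
                     + M * (real (Suc k) * r ^ Suc k * ((u + M) * (h - s)))"
        using vd e_h ed vnn[OF s0(1), of "Suc k"] v_le_M[OF s0(1), of "Suc k"] h0
        by (intro add_mono mult_mono) auto
      also have "\<dots> \<le> Bd k * (h - s)"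
      proof -
        have "real (Suc k) \<le> real (Suc k) ^ 2" by (simp add: power2_eq_square)
        then have "M * (real (Suc k) * r ^ Suc k * ((u + M) * (h - s)))
              \<le> M * (real (Suc k) ^ 2 * r ^ Suc k * ((u + M) * (h - s)))"
          using M_pos r u0 h0 by (intro mult_left_mono mult_right_mono) auto
        then show ?thesis unfolding Bd_def by (simp add: algebra_simps)
      qed
      finally have "\<bar>tm k h - tm k s\<bar> \<le> Bd k * (h - s)" .
      then show ?thesis using h0 by (simp add: a_def abs_divide divide_le_eq)
    qed
    have ev_bd: "eventually (\<lambda>(k,h). norm (a k h) \<le> Bd k) (at_top \<times>\<^sub>F at_right s)"
      unfolding eventually_prod_filter
      by (intro exI[of _ "\<lambda>_. True"] exI[of _ "\<lambda>h. h \<in> {s<..<t}"])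
         (use eventually_at_right_real[OF s0(2)] abd in auto)
    have lim: "((\<lambda>h. \<Sum>k. a k h) \<longlongrightarrow> (\<Sum>k. c k)) (at_right s)"
      using tannerys_theorem[OF alim ev_bd Bdsum] by simp
    have ev_eq: "eventually (\<lambda>h. (\<Sum>k. a k h) = (Q h - Q s) / (h - s)) (at_right s)"
      using eventually_at_right_real[OF s0(2)]
    proof eventually_elim
      case (elim h)
      then have "h \<in> {0..t}" "s \<in> {0..t}" using s0 by auto
      then show ?case unfolding a_def Q_def
        using suminf_diff[OF tm_summ tm_summ] suminf_divide[OF summable_diff[OF tm_summ tm_summ]]
        by auto
    qed
    have "(Q has_real_derivative (\<Sum>k. c k)) (at_right s)"
      unfolding has_field_derivative_iff using tendsto_cong[OF ev_eq] lim by simp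
    moreover have "(\<Sum>k. c k) = Dser s (y s) * (Q s - u)"
    proof -
      have "(\<lambda>k. G (Suc k) s * exp (- real (Suc k) * y s)) sums (Dser s (y s) * P s (y s))"
        by (rule cauchy_identity) (use s0 ys in auto)
      moreover have "(\<lambda>k. u * (real (Suc k) * v s (Suc k) * exp (- real (Suc k) * y s))) sums (u * Dser s (y s))"
        unfolding Dser_def by (intro sums_mult summable_sums Dser_summable) (use s0 ys in auto)
      ultimately have "c sums (Dser s (y s) * P s (y s) - u * Dser s (y s))"
        unfolding c_def[abs_def] by (rule sums_diff)
      then show ?thesis by (simp add: sums_iff Q_eq algebra_simps)
    qed
    ultimately show ?thesis by simp
  qed
  (* Gronwall *)
  define R where "R s = (Q s - u)^2 * exp (- (2 * B) * s)" for s
  have Rcont: "continuous_on {0..t} R"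
    unfolding R_def by (intro continuous_intros Qcont)
  have "R t \<le> R 0"
  proof (rule deriv_right_mono[OF t Rcont])
    fix s assume s: "s \<in> {0..<t}"
    have "(R has_real_derivative
           (2 * (Q s - u) * (Dser s (y s) * (Q s - u))) * exp (- (2 * B) * s)
           + exp (- (2 * B) * s) * (- (2 * B)) * (Q s - u)^2) (at_right s)"
      unfolding R_def[abs_def]
      by (rule DERIV_mult[OF _ DERIV_chain2[OF DERIV_exp]])
         (rule derivative_eq_intros Qder[OF s] refl | simp)+
    moreover have "(2 * (Q s - u) * (Dser s (y s) * (Q s - u))) * exp (- (2 * B) * s)
           + exp (- (2 * B) * s) * (- (2 * B)) * (Q s - u)^2
           = 2 * exp (- (2 * B) * s) * (Q s - u)^2 * (Dser s (y s) - B)"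
      by (simp add: algebra_simps power2_eq_square)
    moreover have "2 * exp (- (2 * B) * s) * (Q s - u)^2 * (Dser s (y s) - B) \<le> 0"
      using Dbd[of s] s by (intro mult_nonneg_nonpos) auto
    ultimately show "\<exists>D. (R has_real_derivative D) (at_right s) \<and> D \<le> 0" by auto
  qed
  moreover have "Q 0 = u" by (simp add: Q_eq y_eq J0 u_def)
  ultimately have "(Q t - u)^2 * exp (- (2 * B) * t) \<le> 0" by (simp add: R_def)
  then have "(Q t - u)^2 \<le> 0" by (simp add: mult_le_0_iff)
  then have "Q t = u" by simp
  then show ?thesis by (simp add: Q_eq y_def u_def)
qed

end


lemma exp_le1: "z \<ge> 0 \<Longrightarrow> exp (- real n * z) \<le> 1"
  unfolding exp_neg_pow by (rule power_le_one) auto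

lemma exp_lt1: "z > 0 \<Longrightarrow> exp (- real (Suc n) * z) < 1"
  unfolding exp_neg_pow by (rule power_Suc_less_one) auto

context crit begin

lemma abel: assumes s: "s \<ge> 0" shows "((\<lambda>z. P s z) \<longlongrightarrow> mu s) (at_right 0)"
proof -
  have lim: "((\<lambda>z. v s (Suc k) * exp (- real (Suc k) * z)) \<longlongrightarrow> v s (Suc k)) (at_right 0)" for k
  proof -
    have "((\<lambda>z. v s (Suc k) * exp (- real (Suc k) * z)) \<longlongrightarrow> v s (Suc k) * exp (- real (Suc k) * 0)) (at_right 0)"
      by (intro tendsto_intros tendsto_within_subset[OF tendsto_ident_at]) auto
    then show ?thesis by simp
  qed
  have b1: "norm (v s (Suc k) * exp (- real (Suc k) * z)) \<le> v s (Suc k)" if "z > 0" for k z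
  proof -
    have "exp (- real (Suc k) * z) \<le> 1" using exp_le1[of z "Suc k"] that by simp
    then show ?thesis
      using vnn[OF s, of "Suc k"] by (simp add: abs_mult mult_left_le)
  qed
  have bd: "eventually (\<lambda>(k,z). norm (v s (Suc k) * exp (- real (Suc k) * z)) \<le> v s (Suc k)) (at_top \<times>\<^sub>F at_right 0)"
    unfolding eventually_prod_filter
    by (intro exI[of _ "\<lambda>_. True"] exI[of _ "\<lambda>z. z > (0::real)"] conjI)
       (use b1 in \<open>auto simp: eventually_at_right_less\<close>)
  show ?thesis using tannerys_theorem[OF lim bd vsum[OF s]] by (simp add: P_def mu_eq)
qed

lemma P_less_mu: assumes s: "s \<ge> 0" and z: "z > 0" shows "P s z < mu s"
proof -
  obtain i where i: "v s (Suc i) > 0"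
  proof (rule ccontr)
    assume "\<not> thesis"
    have "\<forall>i. v s (Suc i) = 0"
    proof
      fix i
      have "0 \<le> v s (Suc i)" by (rule vnn[OF s]) simp
      moreover have "\<not> v s (Suc i) > 0" using that \<open>\<not> thesis\<close> by blast
      ultimately show "v s (Suc i) = 0" by simp
    qed
    then have "mu s = 0" by (simp add: mu_eq)
    with mu_pos[OF s] show False by simp
  qed
  have "0 < (\<Sum>k. v s (Suc k) - v s (Suc k) * exp (- real (Suc k) * z))"
  proof (rule suminf_pos2[of _ i])
    show "summable (\<lambda>k. v s (Suc k) - v s (Suc k) * exp (- real (Suc k) * z))"
      by (intro summable_diff vsum[OF s] P_summable[OF s z])
    show "0 \<le> v s (Suc k) - v s (Suc k) * exp (- real (Suc k) * z)" for k
      using vnn[OF s, of "Suc k"] z exp_le1[of z "Suc k"] by (simp add: mult_left_le)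
    show "0 < v s (Suc i) - v s (Suc i) * exp (- real (Suc i) * z)"
      using i z exp_lt1[of z i] by (simp add: mult_less_cancel_left1)
  qed
  also have "\<dots> = mu s - P s z"
    unfolding mu_eq P_def by (rule suminf_diff[OF vsum[OF s] P_summable[OF s z], symmetric])
  finally show ?thesis by simp
qed

definition K0 where "K0 = {k. v 0 (Suc k) \<noteq> 0}"

lemma K0_fin: "finite K0"
proof -
  have "finite {k. k \<ge> 1 \<and> v 0 k \<noteq> 0}" using ns by (simp add: in_Nstar_def)
  then have "finite (Suc -` {k. k \<ge> 1 \<and> v 0 k \<noteq> 0})" by (rule finite_vimageI) simp
  moreover have "K0 = Suc -` {k. k \<ge> 1 \<and> v 0 k \<noteq> 0}" by (auto simp: K0_def)
  ultimately show ?thesis by simp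
qed

lemma K0_pos: obtains i where "i \<in> K0" "v 0 (Suc i) > 0"
proof -
  obtain k where k: "k \<ge> 1" "v 0 k \<noteq> 0" using nz by auto
  then obtain i where "k = Suc i" by (cases k) auto
  with k vnn[of 0 k] have "i \<in> K0" "v 0 (Suc i) > 0" by (auto simp: K0_def)
  then show ?thesis by (rule that)
qed

lemma P0_fin: "P 0 z = (\<Sum>k\<in>K0. v 0 (Suc k) * exp (- real (Suc k) * z))"
  unfolding P_def by (rule suminf_finite[OF K0_fin]) (auto simp: K0_def)

lemma Dser0_fin: "Dser 0 z = (\<Sum>k\<in>K0. real (Suc k) * v 0 (Suc k) * exp (- real (Suc k) * z))"
  unfolding Dser_def by (rule suminf_finite[OF K0_fin]) (auto simp: K0_def)

lemma M_fin: "M = (\<Sum>k\<in>K0. v 0 (Suc k))"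
  unfolding mu_eq by (rule suminf_finite[OF K0_fin]) (auto simp: K0_def)

lemma p0_cont: "continuous_on A (P 0)"
proof -
  have "P 0 = (\<lambda>z. \<Sum>k\<in>K0. v 0 (Suc k) * exp (- real (Suc k) * z))" using P0_fin by auto
  then show ?thesis by (auto intro!: continuous_intros)
qed

lemma p0_isCont: "isCont (P 0) z"
  using p0_cont[of UNIV] by (simp add: continuous_on_eq_continuous_at)

lemma p0_deriv: "(P 0 has_real_derivative - Dser 0 z) (at z)"
proof -
  have e: "P 0 = (\<lambda>z. \<Sum>k\<in>K0. v 0 (Suc k) * exp (- real (Suc k) * z))" using P0_fin by auto
  have "((\<lambda>z. \<Sum>k\<in>K0. v 0 (Suc k) * exp (- real (Suc k) * z)) has_real_derivative
          (\<Sum>k\<in>K0. v 0 (Suc k) * (exp (- real (Suc k) * z) * (- real (Suc k))))) (at z)"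
  proof (rule DERIV_sum)
    fix k
    have "((\<lambda>z. - real (Suc k) * z) has_real_derivative - real (Suc k)) (at z)"
      using DERIV_cmult[OF DERIV_ident, of "- real (Suc k)" z] by simp
    from DERIV_cmult[OF DERIV_chain2[OF DERIV_exp this], of "v 0 (Suc k)"]
    show "((\<lambda>z. v 0 (Suc k) * exp (- real (Suc k) * z)) has_real_derivative
           v 0 (Suc k) * (exp (- real (Suc k) * z) * (- real (Suc k)))) (at z)" .
  qed
  moreover have "(\<Sum>k\<in>K0. v 0 (Suc k) * (exp (- real (Suc k) * z) * (- real (Suc k)))) = - Dser 0 z"
    unfolding Dser0_fin by (simp add: sum_negf[symmetric] algebra_simps)
  ultimately show ?thesis using e by simp
qed

lemma Dser0_pos: "Dser 0 z > 0"
proof -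
  obtain i where i: "i \<in> K0" "v 0 (Suc i) > 0" by (rule K0_pos)
  have "0 < (\<Sum>k\<in>K0. real (Suc k) * v 0 (Suc k) * exp (- real (Suc k) * z))"
  proof (rule sum_pos2[OF K0_fin i(1)])
    show "0 < real (Suc i) * v 0 (Suc i) * exp (- real (Suc i) * z)" using i by simp
    show "\<And>k. k \<in> K0 \<Longrightarrow> 0 \<le> real (Suc k) * v 0 (Suc k) * exp (- real (Suc k) * z)"
      using vnn[of 0] by simp
  qed
  then show ?thesis by (simp add: Dser0_fin)
qed

lemma p0_strict: assumes "a < b" shows "P 0 b < P 0 a"
proof -
  have "\<exists>y. (P 0 has_real_derivative y) (at x) \<and> y < 0" for x
    using p0_deriv[of x] Dser0_pos[of x] by (intro exI[of _ "- Dser 0 x"]) auto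
  then show ?thesis using DERIV_neg_imp_decreasing[OF assms(1)] by blast
qed

lemma p0_zero: "P 0 0 = M" by (simp add: P0_fin M_fin)

lemma p0_bound: assumes "X \<ge> 0" shows "P 0 X \<le> M * exp (- X)"
proof -
  have "P 0 X \<le> (\<Sum>k\<in>K0. v 0 (Suc k) * exp (- X))"
    unfolding P0_fin
  proof (rule sum_mono)
    fix k
    have "- real (Suc k) * X \<le> - X" using assms by (simp add: algebra_simps)
    then have "exp (- real (Suc k) * X) \<le> exp (- X)" by simp
    then show "v 0 (Suc k) * exp (- real (Suc k) * X) \<le> v 0 (Suc k) * exp (- X)"
      using vnn[of 0 "Suc k"] by (intro mult_left_mono) auto
  qed
  also have "\<dots> = M * exp (- X)" by (simp add: M_fin sum_distrib_right)
  finally show ?thesis .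
qed

lemma p0_nonneg: "0 \<le> P 0 z"
  unfolding P0_fin by (rule sum_nonneg) (use vnn[of 0] in auto)

lemma yy_decr: assumes "0 \<le> a" "a \<le> b" "mu b \<ge> P 0 x" shows "yy x b \<le> yy x a"
proof -
  have "(b - a) * mu b \<le> J b - J a" by (rule J_bounds(1)[OF assms(1,2)])
  moreover have "(b - a) * P 0 x \<le> (b - a) * mu b" using assms by (intro mult_left_mono) auto
  ultimately show ?thesis by (simp add: yy_def algebra_simps)
qed

lemma yy_incr: assumes "0 \<le> a" "a \<le> b" "mu a \<le> P 0 x" shows "yy x a \<le> yy x b"
proof -
  have "J b - J a \<le> (b - a) * mu a" by (rule J_bounds(2)[OF assms(1,2)])
  moreover have "(b - a) * mu a \<le> (b - a) * P 0 x" using assms by (intro mult_left_mono) auto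
  ultimately show ?thesis by (simp add: yy_def algebra_simps)
qed

lemma G2: assumes t: "t \<ge> 0" and x0: "P 0 x0 = mu t" shows "yy x0 t \<le> 0"
proof (rule ccontr)
  assume "\<not> ?thesis"
  then have yt: "yy x0 t > 0" by simp
  have "\<forall>s\<in>{0..t}. yy x0 s > 0"
  proof
    fix s assume s: "s \<in> {0..t}"
    have "yy x0 t \<le> yy x0 s" by (rule yy_decr) (use s x0 in auto)
    with yt show "yy x0 s > 0" by simp
  qed
  from core[OF t this] have "P t (yy x0 t) = mu t" using x0 by simp
  with P_less_mu[OF t yt] show False by simp
qed

lemma yy_cont_x: "isCont (\<lambda>x. yy x s) x"
  unfolding yy_def by (intro continuous_intros p0_isCont)

end


context crit begin

lemma yy_cont: "continuous_on {0..} (yy x)"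
  unfolding yy_def[abs_def] by (intro continuous_intros J_cont)

lemma yy_isCont: "r > 0 \<Longrightarrow> isCont (yy x) r"
proof -
  assume r: "r > 0"
  have "continuous_on {0<..} (yy x)" by (rule continuous_on_subset[OF yy_cont]) auto
  then show ?thesis using r by (simp add: continuous_on_eq_continuous_at)
qed

lemma yy_right: "r \<ge> 0 \<Longrightarrow> (yy x \<longlongrightarrow> yy x r) (at_right r)"
proof -
  assume r: "r \<ge> 0"
  have "(yy x \<longlongrightarrow> yy x r) (at r within {0..})" using yy_cont[of x] r by (simp add: continuous_on_def)
  then show ?thesis by (rule tendsto_within_subset) (use r in auto)
qed

lemma yy_x_right: "((\<lambda>x'. yy x' r) \<longlongrightarrow> yy x r) (at_right x)"
  using yy_cont_x[where s=r and x=x] by (auto simp: isCont_def intro: tendsto_within_subset)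

lemma J_le: "0 \<le> r \<Longrightarrow> J r \<le> M * r"
  using J_nonneg_incr[of 0 r] by (simp add: J0)

lemma step1:
  assumes s: "s \<ge> 0" and x: "x \<ge> 0" and neg: "yy x s < 0"
  shows "\<exists>s'\<in>{0..s}. yy x s' < 0 \<and> mu s' < P 0 x"
proof -
  define X where "X = s * M + x + 1"
  have "0 \<le> s * M" using s M_pos by simp
  then have xX: "x < X" by (simp add: X_def)
  have Xgood: "yy x' r > 0" if "x' \<ge> X" "r \<in> {0..s}" for x' r
  proof -
    have "J r \<le> M * r" using that by (intro J_le) auto
    also have "\<dots> \<le> M * s" using that M_pos by (intro mult_left_mono) auto
    finally have "J r \<le> s * M" by (simp add: mult.commute)
    moreover have "0 \<le> r * P 0 x'" using that p0_nonneg by simp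
    ultimately show ?thesis using that x by (simp add: yy_def X_def)
  qed
  define B where "B = {x..X} \<times> {0..s}"
  define Y where "Y p = yy (fst p) (snd p)" for p :: "real \<times> real"
  have Ycont: "continuous_on B Y"
  proof -
    have c1: "continuous_on B (\<lambda>p. P 0 (fst p))"
      by (rule continuous_on_compose2[OF p0_cont[of UNIV]]) (auto intro: continuous_intros)
    have c2: "continuous_on B (\<lambda>p. J (snd p))"
      by (rule continuous_on_compose2[OF J_cont]) (auto simp: B_def intro: continuous_intros)
    show ?thesis unfolding Y_def[abs_def] yy_def by (intro continuous_intros c1 c2)
  qed
  define K where "K = B \<inter> Y -` {..0}"
  have cK: "compact K"
  proof -
    have "closed K" unfolding K_def by (rule continuous_closed_preimage[OF Ycont]) (auto simp: B_def intro: closed_Times)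
    moreover have "compact B" unfolding B_def by (intro compact_Times compact_Icc)
    ultimately have "compact (B \<inter> K)" by blast
    moreover have "B \<inter> K = K" by (auto simp: K_def)
    ultimately show ?thesis by simp
  qed
  have xsK: "(x, s) \<in> K" using neg xX s by (auto simp: K_def B_def Y_def)
  have cfK: "compact (fst ` K)" by (rule compact_continuous_image[OF continuous_on_fst cK]) (rule continuous_on_id)
  obtain xs where xs: "xs \<in> fst ` K" "\<And>z. z \<in> fst ` K \<Longrightarrow> z \<le> xs"
    using compact_attains_sup[OF cfK] xsK by force
  obtain ss where ssK: "(xs, ss) \<in> K" using xs(1) by force
  have ss: "0 \<le> ss" "ss \<le> s" "xs \<ge> x" "xs \<le> X" "yy xs ss \<le> 0" using ssK by (auto simp: K_def B_def Y_def)
  have good: "\<forall>r\<in>{0..s}. yy x' r > 0" if "x' > xs" for x'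
  proof
    fix r assume r: "r \<in> {0..s}"
    show "yy x' r > 0"
    proof (cases "x' \<ge> X")
      case True then show ?thesis using Xgood r by auto
    next
      case False
      show ?thesis
      proof (rule ccontr)
        assume "\<not> ?thesis"
        then have "(x', r) \<in> K" using False that ss r by (auto simp: K_def B_def Y_def)
        then have "x' \<le> xs" using xs(2)[of x'] by force
        with that show False by simp
      qed
    qed
  qed
  have lim_good: "yy xs r \<ge> 0" if r: "r \<in> {0..s}" for r
  proof (rule tendsto_lowerbound[OF yy_x_right])
    show "\<forall>\<^sub>F x' in at_right xs. 0 \<le> yy x' r"
      using eventually_at_right_less[of xs] by eventually_elim (use good r in fastforce)
  qed simp
  have xsx: "xs > x"
  proof (rule ccontr)
    assume "\<not> xs > x"
    then have "xs = x" using ss by simp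
    with lim_good[of s] neg s show False by simp
  qed
  have yss: "yy xs ss = 0" using lim_good[of ss] ss by simp
  have mueq: "mu ss = P 0 xs"
  proof -
    define zeta where "zeta x' = yy x' ss" for x'
    have ev: "eventually (\<lambda>x'. P ss (zeta x') = P 0 x') (at_right xs)"
      using eventually_at_right_less[of xs]
    proof eventually_elim
      case (elim x')
      have "\<forall>r\<in>{0..ss}. yy x' r > 0" using good[OF elim] ss by auto
      from core[OF ss(1) this] show ?case by (simp add: zeta_def)
    qed
    have zl: "filterlim zeta (at_right 0) (at_right xs)"
    proof (rule tendsto_imp_filterlim_at_right)
      show "(zeta \<longlongrightarrow> 0) (at_right xs)" using yy_x_right[of ss xs] yss by (simp add: zeta_def[abs_def])
      show "\<forall>\<^sub>F x' in at_right xs. 0 < zeta x'"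
        using eventually_at_right_less[of xs] by eventually_elim (use good ss in \<open>auto simp: zeta_def\<close>)
    qed
    have l1: "((\<lambda>x'. P ss (zeta x')) \<longlongrightarrow> mu ss) (at_right xs)"
      by (rule filterlim_compose[OF abel[OF ss(1)] zl])
    have l2: "((\<lambda>x'. P 0 x') \<longlongrightarrow> P 0 xs) (at_right xs)"
      using p0_isCont[of xs] by (auto simp: isCont_def intro: tendsto_within_subset)
    have "((\<lambda>x'. P 0 x') \<longlongrightarrow> mu ss) (at_right xs)" using tendsto_cong[OF ev] l1 by simp
    from tendsto_unique[OF _ this l2] show ?thesis by simp
  qed
  have ulow: "P 0 xs < P 0 x" by (rule p0_strict[OF xsx])
  have diff: "yy xs r - yy x r = (xs - x) + r * (P 0 xs - P 0 x)" for r
    by (simp add: yy_def algebra_simps)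
  have "yy xs s - yy x s > 0" using lim_good[of s] neg s by simp
  then have "(xs - x) + s * (P 0 xs - P 0 x) > 0" using diff by simp
  moreover have "s * (P 0 xs - P 0 x) \<le> ss * (P 0 xs - P 0 x)"
    using ss ulow by (intro mult_right_mono_neg) auto
  ultimately have "yy xs ss - yy x ss > 0" using diff[of ss] by simp
  then have "yy x ss < 0" using yss by simp
  moreover have "mu ss < P 0 x" using mueq ulow by simp
  ultimately show ?thesis using ss by auto
qed

lemma G1: assumes x: "x \<ge> 0" and t: "t \<ge> 0" shows "yy x t \<ge> 0"
proof (rule ccontr)
  assume "\<not> ?thesis"
  then have neg: "yy x t < 0" by simp
  define u where "u = P 0 x"
  define S where "S = {r\<in>{0..t}. yy x r < 0 \<and> mu r < u}"
  obtain s1 where s1: "s1 \<in> S" using step1[OF t x neg] by (auto simp: S_def u_def)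
  have bdd: "bdd_below S" by (auto simp: S_def bdd_below_def)
  define sig where "sig = Inf S"
  have sig0: "sig \<ge> 0" unfolding sig_def by (rule cInf_greatest) (use s1 in \<open>auto simp: S_def\<close>)
  have sigs1: "sig \<le> s1" unfolding sig_def by (rule cInf_lower[OF s1 bdd])
  have A: "mu r < u" if "sig < r" for r
  proof -
    have "\<exists>s2\<in>S. s2 < r" using that cInf_less_iff[of S r] s1 bdd by (auto simp: sig_def)
    then obtain s2 where s2: "s2 \<in> S" "s2 < r" by auto
    then have "mu r \<le> mu s2" by (intro mu_anti) (auto simp: S_def)
    with s2 show ?thesis by (auto simp: S_def)
  qed
  have Bc: "yy x sig \<ge> 0"
  proof (rule ccontr)
    assume "\<not> ?thesis"
    then have ns: "yy x sig < 0" by simp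
    have "yy x 0 = x" by (simp add: yy_def J0)
    then have sigp: "sig > 0" using ns x sig0 by (cases "sig = 0") auto
    have "(yy x \<longlongrightarrow> yy x sig) (at_left sig)"
      using yy_isCont[OF sigp] by (auto simp: isCont_def intro: tendsto_within_subset)
    then have e1: "eventually (\<lambda>r. yy x r < 0) (at_left sig)" using ns by (auto simp: order_tendsto_iff)
    have e2: "eventually (\<lambda>r. 0 < r \<and> r < sig) (at_left sig)"
      using eventually_at_left_real[OF sigp] by eventually_elim auto
    obtain r where r: "yy x r < 0" "0 < r" "r < sig"
      using eventually_happens'[OF _ eventually_conj[OF e1 e2]] by auto
    obtain s' where s': "s' \<in> {0..r}" "yy x s' < 0" "mu s' < u"
      using step1[of r x] r x by (auto simp: u_def)
    have "s' \<in> S" using s' r sigs1 s1 by (auto simp: S_def)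
    then have "sig \<le> s'" unfolding sig_def by (rule cInf_lower[OF _ bdd])
    with s' r show False by simp
  qed
  have "yy x sig \<le> yy x s1"
  proof (cases "sig = s1")
    case True then show ?thesis by simp
  next
    case False
    with sigs1 have lt: "sig < s1" by simp
    show ?thesis
    proof (rule tendsto_upperbound[OF yy_right[OF sig0]])
      show "\<forall>\<^sub>F r in at_right sig. yy x r \<le> yy x s1"
        using eventually_at_right_real[OF lt]
      proof eventually_elim
        case (elim r)
        then show ?case using sig0 A[of r] by (intro yy_incr) (auto simp: u_def)
      qed
    qed simp
  qed
  with Bc s1 show False by (auto simp: S_def)
qed

lemma exists_x0: assumes t: "t \<ge> 0" shows "\<exists>x0\<ge>0. P 0 x0 = mu t"
proof -
  define X where "X = ln (M / mu t)"
  have mt: "0 < mu t" "mu t \<le> M" using mu_pos[OF t] mu_le_M[OF t] by auto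
  have X0: "X \<ge> 0" unfolding X_def using mt by simp
  have "P 0 X \<le> M * exp (- X)" by (rule p0_bound[OF X0])
  also have "\<dots> = mu t" unfolding X_def using mt M_pos by (simp add: exp_minus exp_ln)
  finally have "P 0 X \<le> mu t" .
  moreover have "mu t \<le> P 0 0" using mt p0_zero by simp
  ultimately obtain x0 where "0 \<le> x0" "x0 \<le> X" "P 0 x0 = mu t"
    using IVT2'[of "P 0" X "mu t" 0] X0 p0_cont by blast
  then show ?thesis by auto
qed

end


context crit begin

lemma Dser0_strict: assumes "a < b" shows "Dser 0 b < Dser 0 a"
proof -
  obtain i where i: "i \<in> K0" "v 0 (Suc i) > 0" by (rule K0_pos)
  have lt: "exp (- real (Suc k) * b) < exp (- real (Suc k) * a)" for k
  proof -
    have "real (Suc k) * a < real (Suc k) * b" using assms by simp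
    then have "exp (- (real (Suc k) * b)) < exp (- (real (Suc k) * a))" by simp
    then show ?thesis by simp
  qed
  show ?thesis unfolding Dser0_fin
  proof (rule sum_strict_mono_ex1[OF K0_fin])
    show "\<forall>k\<in>K0. real (Suc k) * v 0 (Suc k) * exp (- real (Suc k) * b)
               \<le> real (Suc k) * v 0 (Suc k) * exp (- real (Suc k) * a)"
    proof
      fix k assume "k \<in> K0"
      show "real (Suc k) * v 0 (Suc k) * exp (- real (Suc k) * b)
               \<le> real (Suc k) * v 0 (Suc k) * exp (- real (Suc k) * a)"
        by (rule mult_left_mono[OF less_imp_le[OF lt]]) (use vnn[of 0 "Suc k"] in simp)
    qed
    show "\<exists>k\<in>K0. real (Suc k) * v 0 (Suc k) * exp (- real (Suc k) * b)
               < real (Suc k) * v 0 (Suc k) * exp (- real (Suc k) * a)"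
      using i lt[of i] by (intro bexI[of _ i]) auto
  qed
qed

lemma wfun_eq: "wfun (v 0) x = inverse (Dser 0 x)"
  by (simp add: wfun_def Dser_def)

lemma m1_eq: "m1 (v 0) = Dser 0 0"
  by (simp add: m1_def Dser_def)

lemma winv_eq: assumes "T = inverse (Dser 0 x0)" shows "winv (v 0) T = x0"
  unfolding winv_def
proof (rule the_equality)
  show "wfun (v 0) x0 = T" using assms by (simp add: wfun_eq)
  fix x assume "wfun (v 0) x = T"
  then have "Dser 0 x = Dser 0 x0" using assms Dser0_pos[of x] Dser0_pos[of x0] by (simp add: wfun_eq)
  then show "x = x0" using Dser0_strict[of x x0] Dser0_strict[of x0 x] by (cases x x0 rule: linorder_cases) auto
qed

lemma F0_eq: "F0 (v 0) T = M - P 0 (winv (v 0) T)"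
proof -
  have s: "summable (\<lambda>k. v 0 (Suc k) * exp (- real (Suc k) * z))" for z
    unfolding P_def by (rule summable_finite[OF K0_fin]) (auto simp: K0_def)
  have "(\<Sum>k. v 0 (Suc k) * (1 - exp (- real (Suc k) * z))) = M - P 0 z" for z
    unfolding mu_eq P_def right_diff_distrib mult_1_right
    by (rule suminf_diff[OF vsum[of 0] s, symmetric]) simp
  then show ?thesis by (simp add: F0_def Let_def)
qed

lemma Phi_int: assumes "T \<ge> 0" shows "((\<lambda>t. M - mu t) has_integral (T * M - J T)) {0..T}"
proof -
  have "(mu has_integral J T) {0..T}" unfolding J_def using integrable_integral[OF mu_integrable[of 0 T]] by simp
  from has_integral_diff[OF has_integral_const_real[of M 0 T] this]
  show ?thesis using assms by (simp add: mult.commute)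
qed

lemma main:
  assumes T: "T \<ge> 0"
  shows "(T \<le> 1 / m1 (v 0) \<longrightarrow> M - mu T = 0 \<and> ((\<lambda>t. M - mu t) has_integral 0) {0..T})
       \<and> (T \<ge> 1 / m1 (v 0) \<longrightarrow> M - mu T = F0 (v 0) T \<and> ((\<lambda>t. M - mu t) has_integral G0 (v 0) T) {0..T})"
proof -
  obtain x0 where x0: "x0 \<ge> 0" "P 0 x0 = mu T" using exists_x0[OF T] by auto
  have y0: "yy x0 T = 0" using G2[OF T x0(2)] G1[OF x0(1) T] by simp
  define h where "h x = x + T * P 0 x" for x
  have hmin: "h x0 \<le> h x" if "x \<ge> 0" for x
    using G1[OF that T] y0 by (simp add: h_def yy_def)
  have hd: "(h has_real_derivative (1 - T * Dser 0 x)) (at x)" for x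
    unfolding h_def by (rule derivative_eq_intros p0_deriv refl | simp)+
  have JT: "J T = x0 + T * P 0 x0" using y0 by (simp add: yy_def)
  have m1pos: "m1 (v 0) > 0" using Dser0_pos[of 0] by (simp add: m1_eq)
  show ?thesis
  proof (cases "x0 = 0")
    case True
    have muT: "mu T = M" using x0 True p0_zero by simp
    have int0: "((\<lambda>t. M - mu t) has_integral 0) {0..T}"
      using Phi_int[OF T] JT True p0_zero by (simp add: mult.commute)
    have Tle: "T \<le> 1 / m1 (v 0)"
    proof (rule ccontr)
      assume "\<not> ?thesis"
      then have "1 / m1 (v 0) < T" by simp
      then have "1 < T * m1 (v 0)" using m1pos by (simp add: field_simps)
      then have "1 - T * Dser 0 0 < 0" by (simp add: m1_eq)
      from DERIV_neg_dec_right[OF hd this] obtain d where d: "d > 0" "\<And>e. e > 0 \<Longrightarrow> e < d \<Longrightarrow> h (0 + e) < h 0"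
        by auto
      have "h (0 + d/2) < h 0" using d by auto
      moreover have "h 0 \<le> h (0 + d/2)" using hmin[of "d/2"] True d by simp
      ultimately show False by simp
    qed
    have rhs: "T \<ge> 1 / m1 (v 0) \<longrightarrow> M - mu T = F0 (v 0) T \<and> ((\<lambda>t. M - mu t) has_integral G0 (v 0) T) {0..T}"
    proof
      assume "T \<ge> 1 / m1 (v 0)"
      with Tle have Teq: "T = inverse (Dser 0 0)" by (simp add: m1_eq divide_inverse)
      have w: "winv (v 0) T = 0" by (rule winv_eq[OF Teq])
      have F: "F0 (v 0) T = 0" using F0_eq[of T] w p0_zero by simp
      have G: "G0 (v 0) T = 0" using F w by (simp add: G0_def)
      show "M - mu T = F0 (v 0) T \<and> ((\<lambda>t. M - mu t) has_integral G0 (v 0) T) {0..T}"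
        using F G muT int0 by simp
    qed
    show ?thesis using muT int0 rhs by simp
  next
    case False
    then have xp: "x0 > 0" using x0 by simp
    have "1 - T * Dser 0 x0 = 0"
    proof (rule DERIV_local_min[OF hd xp])
      show "\<forall>y. \<bar>x0 - y\<bar> < x0 \<longrightarrow> h x0 \<le> h y" using hmin by auto
    qed
    then have Teq: "T = inverse (Dser 0 x0)" using Dser0_pos[of x0] by (simp add: field_simps)
    have w: "winv (v 0) T = x0" by (rule winv_eq[OF Teq])
    have Tgt: "T > 1 / m1 (v 0)"
      using Teq Dser0_strict[OF xp] Dser0_pos[of x0] by (simp add: m1_eq divide_inverse less_imp_inverse_less)
    have F: "F0 (v 0) T = M - mu T" using F0_eq[of T] w x0 by simp
    have G: "G0 (v 0) T = T * M - J T"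
    proof -
      have "G0 (v 0) T = T * (M - mu T) - x0" using F w by (simp add: G0_def)
      also have "\<dots> = T * M - J T" using JT x0(2) by (simp add: algebra_simps)
      finally show ?thesis .
    qed
    show ?thesis using Tgt F G Phi_int[OF T] by simp
  qed
qed

end

theorem lemma5:
  fixes v :: "real \<Rightarrow> nat \<Rightarrow> real" and T :: real
  assumes "in_Nstar (v 0)"
    and "\<exists>k\<ge>1. v 0 k \<noteq> 0"
    and "critical_solution v"
    and "T \<ge> 0"
  shows "(T \<le> 1 / m1 (v 0) \<longrightarrow> m0 (v 0) - m0 (v T) = 0 \<and>
            ((\<lambda>t. m0 (v 0) - m0 (v t)) has_integral 0) {0..T})
       \<and> (T \<ge> 1 / m1 (v 0) \<longrightarrow> m0 (v 0) - m0 (v T) = F0 (v 0) T \<and>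
            ((\<lambda>t. m0 (v 0) - m0 (v t)) has_integral G0 (v 0) T) {0..T})"
proof -
  interpret crit v using assms(1-3) by unfold_locales
  show ?thesis by (rule main[OF assms(4)])
qed


end
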